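(* If $n=6$, then $\Gamma^3=\mathrm{Q}$ and $\Gamma^1\neq\Gamma^3$. For instance, $T=e+2e_{123456}$ satisfies $T\in\Gamma^3$ and $T\notin\Gamma^1$.
   Context: Let $\mathrm{C}$ be either the real Clifford algebra $C\ell_{p,q}$ with $p+q=n$, or the complex Clifford algebra $C\ell(\mathbb{C}^n)$. It has identity $e$ and generators $e_1,\dots,e_n$ satisfying $e_ae_b+e_be_a=2\eta_{ab}e$. In the real case $\eta=\mathrm{diag}(1,\dots,1,-1,\dots,-1)$ with $p$ entries $+1$ and $q$ entries $-1$. In the complex case $\eta=I_n$. For $a_1<\dots<a_k$ write $e_{a_1\dots a_k}=e_{a_1}\cdots e_{a_k}$. $\mathrm{C}^k$ is the grade-$k$ subspace, spanned by the $e_{a_1\dots a_k}$ with $k$ indices. The even subspace is $\mathrm{C}^{(0)}=\bigoplus_{k\text{ even}}\mathrm{C}^k$ and the odd subspace is $\mathrm{C}^{(1)}=\bigoplus_{k\text{ odd}}\mathrm{C}^k$. The reversion $U\mapsto\tilde U$ is the linear anti-automorphism acting on $\mathrm{C}^k$ as $(-1)^{k(k-1)/2}$. For $S\subseteq\mathrm{C}$, $S^\times$ is the set of elements of $S$ invertible in $\mathrm{C}$, and $\mathrm{C}^{\times(j)}:=(\mathrm{C}^{(j)})^\times$. $\mathrm{Z}$ is the center: $\mathrm{Z}=\mathrm{C}^0$ for $n$ even and $\mathrm{Z}=\mathrm{C}^0\oplus\mathrm{C}^n$ for $n$ odd. Define: <ul> <li>$\Gamma^k=\{T\in\mathrm{C}^\times: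 T\,\mathrm{C}^k\,T^{-1}\subseteq\mathrm{C}^k\}$;</li> <li>$\mathrm{P}:=\mathrm{Z}^\times(\mathrm{C}^{\times(0)}\cup\mathrm{C}^{\times(1)})=\{WT: W\in\mathrm{Z}^\times, T\in\mathrm{C}^{\times(0)}\cup\mathrm{C}^{\times(1)}\}$;</li> <li>$\mathrm{Q}:=\{T\in\mathrm{P}:\tilde TT\in\mathrm{Z}^\times\}$.</li> </ul> *)

theory Defs
  imports Complex_Main
begin

text \<open>Elements of a Clifford algebra on generators e_0,...,e_(n-1) (0-based indices;
  e_{a1...ak} with a1<...<ak corresponds to the index set {a1,...,ak})
  are coefficient functions on index sets, supported on subsets of {..<n}.
  The diagonal metric is eta :: nat => 'a (eta i = eta_ii).\<close>

type_synonym 'a clf = "nat set \<Rightarrow> 'a"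

definition cl_carrier :: "nat \<Rightarrow> 'a::zero clf set" where
  "cl_carrier n = {f. \<forall>A. f A \<noteq> 0 \<longrightarrow> A \<subseteq> {..<n}}"

definition cl_one :: "'a::{zero,one} clf" where
  "cl_one = (\<lambda>A. if A = {} then 1 else 0)"

definition cl_blade :: "nat set \<Rightarrow> 'a::{zero,one} clf" where
  "cl_blade S = (\<lambda>A. if A = S then 1 else 0)"

definition cl_add :: "'a::plus clf \<Rightarrow> 'a clf \<Rightarrow> 'a clf" where
  "cl_add x y = (\<lambda>A. x A + y A)"

definition cl_smul :: "'a::times \<Rightarrow> 'a clf \<Rightarrow> 'a clf" where
  "cl_smul c x = (\<lambda>A. c * x A)"

text \<open>Sign in e_A e_C = sign * (prod_{k in A cap C} eta k) * e_{A symdiff C}.\<close>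
definition blade_sign :: "nat set \<Rightarrow> nat set \<Rightarrow> 'a::comm_ring_1" where
  "blade_sign A C = (-1) ^ card {(i, j). i \<in> A \<and> j \<in> C \<and> j < i}"

definition cl_mult :: "nat \<Rightarrow> (nat \<Rightarrow> 'a::comm_ring_1) \<Rightarrow> 'a clf \<Rightarrow> 'a clf \<Rightarrow> 'a clf" where
  "cl_mult n \<eta> x y = (\<lambda>B. \<Sum>A\<in>Pow {..<n}. \<Sum>C\<in>Pow {..<n}.
      if (A - C) \<union> (C - A) = B
      then blade_sign A C * (\<Prod>k\<in>A \<inter> C. \<eta> k) * x A * y C else 0)"

definition cl_units :: "nat \<Rightarrow> (nat \<Rightarrow> 'a::comm_ring_1) \<Rightarrow> 'a clf set" where
  "cl_units n \<eta> = {x \<in> cl_carrier n. \<exists>y \<in> cl_carrier n.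
      cl_mult n \<eta> x y = cl_one \<and> cl_mult n \<eta> y x = cl_one}"

definition cl_inv :: "nat \<Rightarrow> (nat \<Rightarrow> 'a::comm_ring_1) \<Rightarrow> 'a clf \<Rightarrow> 'a clf" where
  "cl_inv n \<eta> x = (SOME y. y \<in> cl_carrier n \<and>
      cl_mult n \<eta> x y = cl_one \<and> cl_mult n \<eta> y x = cl_one)"

definition cl_grade :: "nat \<Rightarrow> nat \<Rightarrow> 'a::zero clf set" where
  "cl_grade n k = {f \<in> cl_carrier n. \<forall>A. f A \<noteq> 0 \<longrightarrow> card A = k}"

definition cl_even :: "nat \<Rightarrow> 'a::zero clf set" where
  "cl_even n = {f \<in> cl_carrier n. \<forall>A. f A \<noteq> 0 \<longrightarrow> even (card A)}"

definition cl_odd :: "nat \<Rightarrow> 'a::zero clf set" where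
  "cl_odd n = {f \<in> cl_carrier n. \<forall>A. f A \<noteq> 0 \<longrightarrow> odd (card A)}"

definition cl_rev :: "'a::comm_ring_1 clf \<Rightarrow> 'a clf" where
  "cl_rev f = (\<lambda>A. (-1) ^ (card A * (card A - 1) div 2) * f A)"

definition cl_center :: "nat \<Rightarrow> 'a::comm_ring_1 clf set" where
  "cl_center n = (if even n then cl_grade n 0
     else {cl_add a b | a b. a \<in> cl_grade n 0 \<and> b \<in> cl_grade n n})"

definition cl_Gamma :: "nat \<Rightarrow> (nat \<Rightarrow> 'a::comm_ring_1) \<Rightarrow> nat \<Rightarrow> 'a clf set" where
  "cl_Gamma n \<eta> k = {T \<in> cl_units n \<eta>. \<forall>U \<in> cl_grade n k.
      cl_mult n \<eta> (cl_mult n \<eta> T U) (cl_inv n \<eta> T) \<in> cl_grade n k}"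

definition cl_P :: "nat \<Rightarrow> (nat \<Rightarrow> 'a::comm_ring_1) \<Rightarrow> 'a clf set" where
  "cl_P n \<eta> = {cl_mult n \<eta> W T | W T. W \<in> cl_units n \<eta> \<inter> cl_center n \<and>
      T \<in> (cl_units n \<eta> \<inter> cl_even n) \<union> (cl_units n \<eta> \<inter> cl_odd n)}"

definition cl_Q :: "nat \<Rightarrow> (nat \<Rightarrow> 'a::comm_ring_1) \<Rightarrow> 'a clf set" where
  "cl_Q n \<eta> = {T \<in> cl_P n \<eta>. cl_mult n \<eta> (cl_rev T) T \<in> cl_units n \<eta> \<inter> cl_center n}"

definition sig_metric :: "nat \<Rightarrow> nat \<Rightarrow> nat \<Rightarrow> real" where
  "sig_metric p q i = (if i < p then 1 else if i < p + q then -1 else 0)"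

end

theory Submission
  imports Defs
begin


abbreviation sd :: "nat set \<Rightarrow> nat set \<Rightarrow> nat set" where
  "sd A C \<equiv> (A - C) \<union> (C - A)"

definition sg :: "nat \<Rightarrow> nat \<Rightarrow> 'a::comm_ring_1" where
  "sg i j = (if j < i then -1 else 1)"

lemma a1: 
  assumes "finite A" "finite C"
  shows "card {(i, j). i \<in> A \<and> j \<in> C \<and> j < i} = (\<Sum>i\<in>A. card {j\<in>C. j < i})"
proof -
  have e: "{(i, j). i \<in> A \<and> j \<in> C \<and> j < i} = (SIGMA i:A. {j\<in>C. j < i})" by auto
  show ?thesis unfolding e using assms by simp
qed

lemma a2: 
  assumes "finite A" "finite C"
  shows "blade_sign A C = (\<Prod>i\<in>A. (-1::'a::comm_ring_1) ^ card {j\<in>C. j < i})"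
  unfolding blade_sign_def a1[OF assms] by (rule power_sum)

lemma a3: 
  assumes "finite C"
  shows "(\<Prod>j\<in>C. sg i j) = (-1::'a::comm_ring_1) ^ card {j\<in>C. j < i}"
proof -
  have "(\<Prod>j\<in>C. sg i j) = (\<Prod>j\<in>C \<inter> {j. j < i}. (-1::'a)) * (\<Prod>j\<in>C \<inter> - {j. j < i}. 1)"
    unfolding sg_def using assms by (rule prod.If_cases)
  also have "C \<inter> {j. j < i} = {j\<in>C. j < i}" by auto
  finally show ?thesis by simp
qed
definition S :: "nat set \<Rightarrow> nat set \<Rightarrow> 'a::comm_ring_1" where
  "S A C = (\<Prod>i\<in>A. \<Prod>j\<in>C. sg i j)"

lemma blade_sign_S:
  assumes "finite A" "finite C"
  shows "blade_sign A C = (S A C :: 'a::comm_ring_1)"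
  unfolding a2[OF assms] S_def by (rule prod.cong[OF refl], rule a3[OF assms(2), symmetric])

lemma prod_sd:
  fixes g :: "nat \<Rightarrow> 'a::comm_ring_1"
  assumes "finite A" "finite C" "\<And>i. g i * g i = 1"
  shows "prod g (sd A C) = prod g A * prod g C"
proof -
  have a: "prod g A = prod g (A - C) * prod g (A \<inter> C)"
    using assms by (metis Int_Diff_disjoint Int_commute Un_Diff_Int finite_Diff finite_Int prod.union_disjoint)
  have c: "prod g C = prod g (C - A) * prod g (A \<inter> C)"
    using assms by (metis Int_Diff_disjoint Int_commute Un_Diff_Int finite_Diff finite_Int prod.union_disjoint)
  have u: "prod g (sd A C) = prod g (A - C) * prod g (C - A)"
    using assms by (intro prod.union_disjoint) auto
  have sq: "prod g (A \<inter> C) * prod g (A \<inter> C) = 1"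
    using assms by (simp add: prod.distrib[symmetric])
  show ?thesis unfolding a c u
    by (metis (no_types, lifting) mult.assoc mult.commute mult.left_commute mult_1_right sq)
qed

lemma sg_sq: "sg i j * sg i j = (1::'a::comm_ring_1)"
  by (simp add: sg_def)

lemma prod_sq1:
  fixes f :: "nat \<Rightarrow> 'a::comm_ring_1"
  assumes "\<And>j. f j * f j = 1"
  shows "prod f X * prod f X = 1"
proof -
  have "prod f X * prod f X = prod (\<lambda>j. f j * f j) X" by (rule prod.distrib[symmetric])
  also have "\<dots> = 1" using assms by simp
  finally show ?thesis .
qed

lemma S_sd_left:
  assumes "finite A" "finite C"
  shows "S (sd A C) E = (S A E * S C E :: 'a::comm_ring_1)"
  unfolding S_def
  by (rule prod_sd[OF assms]) (rule prod_sq1, rule sg_sq)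

lemma S_sd_right:
  assumes "finite C" "finite E"
  shows "S A (sd C E) = (S A C * S A E :: 'a::comm_ring_1)"
proof -
  have "\<And>i. (\<Prod>j\<in>sd C E. sg i j) = (\<Prod>j\<in>C. sg i j) * (\<Prod>j\<in>E. (sg i j::'a))"
    by (rule prod_sd[OF assms]) (rule sg_sq)
  hence "S A (sd C E) = (\<Prod>i\<in>A. (\<Prod>j\<in>C. sg i j) * (\<Prod>j\<in>E. (sg i j::'a)))"
    unfolding S_def by simp
  also have "\<dots> = S A C * S A E" unfolding S_def by (rule prod.distrib)
  finally show ?thesis .
qed

lemma S_sq: "S A C * S A C = (1::'a::comm_ring_1)"
  unfolding S_def by (rule prod_sq1, rule prod_sq1, rule sg_sq)

lemma card_lower:
  fixes A :: "nat set"
  assumes "finite A"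
  shows "card {(i, j). i \<in> A \<and> j \<in> A \<and> j < i} = card A * (card A - 1) div 2"
proof -
  let ?L = "{(i, j). i \<in> A \<and> j \<in> A \<and> j < i}"
  let ?U = "{(i, j). i \<in> A \<and> j \<in> A \<and> i < j}"
  let ?D = "{(i, j). i \<in> A \<and> j \<in> A \<and> i = j}"
  have fL: "finite ?L" by (rule finite_subset[of _ "A \<times> A"]) (use assms in auto)
  have fU: "finite ?U" by (rule finite_subset[of _ "A \<times> A"]) (use assms in auto)
  have fD: "finite ?D" by (rule finite_subset[of _ "A \<times> A"]) (use assms in auto)
  have "A \<times> A = (?L \<union> ?U) \<union> ?D"
  proof (rule set_eqI)
    fix x :: "nat \<times> nat" obtain a b where x: "x = (a,b)" by fastforce
    have "a < b \<or> b < a \<or> a = b" by linarith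
    thus "x \<in> A \<times> A \<longleftrightarrow> x \<in> (?L \<union> ?U) \<union> ?D" unfolding x by auto
  qed
  hence "card (A \<times> A) = card (?L \<union> ?U) + card ?D"
    using fL fU fD by (simp add: card_Un_disjoint disjoint_iff)
  also have "card (?L \<union> ?U) = card ?L + card ?U"
    using fL fU by (rule card_Un_disjoint) auto
  also have "?U = prod.swap ` ?L" by auto
  also have "card \<dots> = card ?L" by (rule card_image) (simp add: inj_on_def)
  also have "?D = (\<lambda>i. (i,i)) ` A" by auto
  also have "card \<dots> = card A" by (rule card_image) (simp add: inj_on_def)
  finally have "card A * card A = 2 * card ?L + card A" by (simp add: card_cartesian_product)
  hence "card A * (card A - 1) = 2 * card ?L" by (simp add: algebra_simps diff_mult_distrib2)
  thus ?thesis by simp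
qed

lemma rev_sign:
  assumes "finite A"
  shows "(-1::'a::comm_ring_1) ^ (card A * (card A - 1) div 2) = S A A"
  using blade_sign_S[OF assms assms] card_lower[OF assms] unfolding blade_sign_def by simp

lemma par_sd:
  assumes "finite A" "finite C"
  shows "(-1::'a::comm_ring_1) ^ card (sd A C) = (-1) ^ card A * (-1) ^ card C"
  using prod_sd[OF assms, of "\<lambda>_. -1::'a"] by simp



definition K :: "(nat \<Rightarrow> 'a::comm_ring_1) \<Rightarrow> nat set \<Rightarrow> nat set \<Rightarrow> 'a" where
  "K \<eta> A C = blade_sign A C * (\<Prod>k\<in>A \<inter> C. \<eta> k)"

lemma mult_eq: "cl_mult n \<eta> x y B = (\<Sum>A\<in>Pow {..<n}. \<Sum>C\<in>Pow {..<n}.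
      if sd A C = B then K \<eta> A C * x A * y C else 0)"
  unfolding cl_mult_def K_def by simp

lemma sum4_swap:
  "(\<Sum>D\<in>P. \<Sum>E\<in>P. \<Sum>A\<in>P. \<Sum>C\<in>P. f D E A C) = (\<Sum>A\<in>P. \<Sum>C\<in>P. \<Sum>E\<in>P. \<Sum>D\<in>P. f D E A C)"
proof -
  have "(\<Sum>D\<in>P. \<Sum>E\<in>P. \<Sum>A\<in>P. \<Sum>C\<in>P. f D E A C) = (\<Sum>D\<in>P. \<Sum>A\<in>P. \<Sum>E\<in>P. \<Sum>C\<in>P. f D E A C)"
    by (rule sum.cong[OF refl], rule sum.swap)
  also have "\<dots> = (\<Sum>A\<in>P. \<Sum>D\<in>P. \<Sum>E\<in>P. \<Sum>C\<in>P. f D E A C)" by (rule sum.swap)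
  also have "\<dots> = (\<Sum>A\<in>P. \<Sum>D\<in>P. \<Sum>C\<in>P. \<Sum>E\<in>P. f D E A C)"
    by (rule sum.cong[OF refl], rule sum.cong[OF refl], rule sum.swap)
  also have "\<dots> = (\<Sum>A\<in>P. \<Sum>C\<in>P. \<Sum>D\<in>P. \<Sum>E\<in>P. f D E A C)"
    by (rule sum.cong[OF refl], rule sum.swap)
  also have "\<dots> = (\<Sum>A\<in>P. \<Sum>C\<in>P. \<Sum>E\<in>P. \<Sum>D\<in>P. f D E A C)"
    by (rule sum.cong[OF refl], rule sum.cong[OF refl], rule sum.swap)
  finally show ?thesis .
qed

lemma sum_collapse:
  assumes "finite P" "X \<in> P"
  shows "(\<Sum>D\<in>P. if sd D E = B then (if X = D then h D else 0) else 0) =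
         (if sd X E = B then h X else (0::'a::comm_ring_1))"
proof -
  have "(\<Sum>D\<in>P. if sd D E = B then (if X = D then h D else 0) else 0) =
        (\<Sum>D\<in>P. if X = D then (if sd D E = B then h D else 0) else 0)"
    by (rule sum.cong) auto
  also have "\<dots> = (if sd X E = B then h X else 0)" using assms by simp
  finally show ?thesis .
qed

lemma if_sum2:
  "(if c then k * (\<Sum>A\<in>P. \<Sum>C\<in>P. g A C) * z else 0) =
   (\<Sum>A\<in>P. \<Sum>C\<in>P. if c then k * g A C * z else (0::'a::comm_ring_1))"
  by (cases c) (simp_all add: sum_distrib_left sum_distrib_right)

lemma if_sum2':
  "(if c then k * x * (\<Sum>A\<in>P. \<Sum>C\<in>P. g A C) else 0) =
   (\<Sum>A\<in>P. \<Sum>C\<in>P. if c then k * x * g A C else (0::'a::comm_ring_1))"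
  by (cases c) (simp_all add: sum_distrib_left sum_distrib_right)

lemma prod_union_dis:
  "finite X \<Longrightarrow> finite Y \<Longrightarrow> X \<inter> Y = {} \<Longrightarrow> prod f X * prod f Y = prod f (X \<union> Y)"
  by (simp add: prod.union_disjoint)

lemma eta_cocycle:
  assumes "finite A" "finite C" "finite E"
  shows "(\<Prod>k\<in>sd A C \<inter> E. \<eta> k) * (\<Prod>k\<in>A \<inter> C. \<eta> k) =
         (\<Prod>k\<in>A \<inter> sd C E. \<eta> k) * (\<Prod>k\<in>C \<inter> E. (\<eta> k :: 'a::comm_ring_1))"
proof -
  have "(\<Prod>k\<in>sd A C \<inter> E. \<eta> k) * (\<Prod>k\<in>A \<inter> C. \<eta> k) = (\<Prod>k\<in>(sd A C \<inter> E) \<union> (A \<inter> C). \<eta> k)"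
    by (rule prod_union_dis) (use assms in auto)
  also have "(sd A C \<inter> E) \<union> (A \<inter> C) = (A \<inter> sd C E) \<union> (C \<inter> E)" by auto
  also have "(\<Prod>k\<in>(A \<inter> sd C E) \<union> (C \<inter> E). \<eta> k) = (\<Prod>k\<in>A \<inter> sd C E. \<eta> k) * (\<Prod>k\<in>C \<inter> E. \<eta> k)"
    by (rule prod_union_dis[symmetric]) (use assms in auto)
  finally show ?thesis .
qed

lemma K_cocycle:
  assumes "finite A" "finite C" "finite E"
  shows "K \<eta> (sd A C) E * K \<eta> A C = K \<eta> A (sd C E) * (K \<eta> C E :: 'a::comm_ring_1)"
proof -
  have fs: "finite (sd A C)" "finite (sd C E)" using assms by auto
  have "K \<eta> (sd A C) E * K \<eta> A C = (S A E * S C E * S A C) * ((\<Prod>k\<in>sd A C \<inter> E. \<eta> k) * (\<Prod>k\<in>A \<inter> C. \<eta> k))"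
    unfolding K_def blade_sign_S[OF fs(1) assms(3)] blade_sign_S[OF assms(1,2)] S_sd_left[OF assms(1,2)]
    by (simp add: ac_simps)
  also have "\<dots> = (S A C * S A E * S C E) * ((\<Prod>k\<in>A \<inter> sd C E. \<eta> k) * (\<Prod>k\<in>C \<inter> E. \<eta> k))"
    unfolding eta_cocycle[OF assms] by (simp add: ac_simps)
  also have "\<dots> = K \<eta> A (sd C E) * K \<eta> C E"
    unfolding K_def blade_sign_S[OF assms(1) fs(2)] blade_sign_S[OF assms(2,3)] S_sd_right[OF assms(2,3)]
    by (simp add: ac_simps)
  finally show ?thesis .
qed

lemma sd_assoc: "sd (sd A C) E = sd A (sd C E)" by auto

lemma cl_assoc: "cl_mult n \<eta> (cl_mult n \<eta> x y) z = cl_mult n \<eta> x (cl_mult n \<eta> y z)"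
proof (rule ext)
  fix B
  let ?P = "Pow {..<n}"
  have fP: "finite ?P" by simp
  have "cl_mult n \<eta> (cl_mult n \<eta> x y) z B =
    (\<Sum>D\<in>?P. \<Sum>E\<in>?P. if sd D E = B then K \<eta> D E * (\<Sum>A\<in>?P. \<Sum>C\<in>?P.
      if sd A C = D then K \<eta> A C * x A * y C else 0) * z E else 0)"
    unfolding mult_eq ..
  also have "\<dots> = (\<Sum>D\<in>?P. \<Sum>E\<in>?P. \<Sum>A\<in>?P. \<Sum>C\<in>?P. if sd D E = B then
      (if sd A C = D then K \<eta> D E * (K \<eta> A C * x A * y C) * z E else 0) else 0)"
    unfolding if_sum2 by (intro sum.cong refl; simp)
  also have "\<dots> = (\<Sum>A\<in>?P. \<Sum>C\<in>?P. \<Sum>E\<in>?P. \<Sum>D\<in>?P. if sd D E = B then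
      (if sd A C = D then K \<eta> D E * (K \<eta> A C * x A * y C) * z E else 0) else 0)"
    by (rule sum4_swap)
  also have "\<dots> = (\<Sum>A\<in>?P. \<Sum>C\<in>?P. \<Sum>E\<in>?P. if sd (sd A C) E = B then
      K \<eta> (sd A C) E * (K \<eta> A C * x A * y C) * z E else 0)"
  proof (intro sum.cong refl)
    fix A C E assume "A \<in> ?P" "C \<in> ?P"
    hence "sd A C \<in> ?P" by auto
    thus "(\<Sum>D\<in>?P. if sd D E = B then
      (if sd A C = D then K \<eta> D E * (K \<eta> A C * x A * y C) * z E else 0) else 0) =
      (if sd (sd A C) E = B then K \<eta> (sd A C) E * (K \<eta> A C * x A * y C) * z E else 0)"
      by (rule sum_collapse[OF fP])
  qed
  also have "\<dots> = (\<Sum>A\<in>?P. \<Sum>C\<in>?P. \<Sum>E\<in>?P. if sd A (sd C E) = B then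
      K \<eta> A (sd C E) * x A * (K \<eta> C E * y C * z E) else 0)"
  proof (intro sum.cong refl)
    fix A C E assume "A \<in> ?P" "C \<in> ?P" "E \<in> ?P"
    hence f: "finite A" "finite C" "finite E" by (auto intro: finite_subset)
    show "(if sd (sd A C) E = B then K \<eta> (sd A C) E * (K \<eta> A C * x A * y C) * z E else 0) =
      (if sd A (sd C E) = B then K \<eta> A (sd C E) * x A * (K \<eta> C E * y C * z E) else 0)"
      using K_cocycle[OF f, of \<eta>] unfolding sd_assoc
      by (simp add: ac_simps)
  qed
  also have "\<dots> = (\<Sum>A\<in>?P. \<Sum>C\<in>?P. \<Sum>E\<in>?P. \<Sum>F\<in>?P. if sd A F = B then
      (if sd C E = F then K \<eta> A F * x A * (K \<eta> C E * y C * z E) else 0) else 0)"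
  proof (intro sum.cong refl)
    fix A C E assume "C \<in> ?P" "E \<in> ?P"
    hence "sd C E \<in> ?P" by auto
    thus "(if sd A (sd C E) = B then K \<eta> A (sd C E) * x A * (K \<eta> C E * y C * z E) else 0) =
      (\<Sum>F\<in>?P. if sd A F = B then
      (if sd C E = F then K \<eta> A F * x A * (K \<eta> C E * y C * z E) else 0) else 0)"
    proof -
      have "(\<Sum>F\<in>?P. if sd A F = B then
        (if sd C E = F then K \<eta> A F * x A * (K \<eta> C E * y C * z E) else 0) else 0) =
        (\<Sum>F\<in>?P. if sd C E = F then (if sd A F = B then
        K \<eta> A F * x A * (K \<eta> C E * y C * z E) else 0) else 0)"
        by (rule sum.cong) auto
      also have "\<dots> = (if sd A (sd C E) = B then K \<eta> A (sd C E) * x A * (K \<eta> C E * y C * z E) else 0)"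
        using \<open>sd C E \<in> ?P\<close> fP by simp
      finally show ?thesis by simp
    qed
  qed
  also have "\<dots> = (\<Sum>A\<in>?P. \<Sum>F\<in>?P. \<Sum>C\<in>?P. \<Sum>E\<in>?P. if sd A F = B then
      (if sd C E = F then K \<eta> A F * x A * (K \<eta> C E * y C * z E) else 0) else 0)"
  proof (rule sum.cong[OF refl])
    fix A
    have "(\<Sum>C\<in>?P. \<Sum>E\<in>?P. \<Sum>F\<in>?P. (if sd A F = B then
      (if sd C E = F then K \<eta> A F * x A * (K \<eta> C E * y C * z E) else 0) else 0)) =
      (\<Sum>C\<in>?P. \<Sum>F\<in>?P. \<Sum>E\<in>?P. (if sd A F = B then
      (if sd C E = F then K \<eta> A F * x A * (K \<eta> C E * y C * z E) else 0) else 0))"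
      by (rule sum.cong[OF refl], rule sum.swap)
    also have "\<dots> = (\<Sum>F\<in>?P. \<Sum>C\<in>?P. \<Sum>E\<in>?P. (if sd A F = B then
      (if sd C E = F then K \<eta> A F * x A * (K \<eta> C E * y C * z E) else 0) else 0))"
      by (rule sum.swap)
    finally show "(\<Sum>C\<in>?P. \<Sum>E\<in>?P. \<Sum>F\<in>?P. (if sd A F = B then
      (if sd C E = F then K \<eta> A F * x A * (K \<eta> C E * y C * z E) else 0) else 0)) =
      (\<Sum>F\<in>?P. \<Sum>C\<in>?P. \<Sum>E\<in>?P. (if sd A F = B then
      (if sd C E = F then K \<eta> A F * x A * (K \<eta> C E * y C * z E) else 0) else 0))" .
  qed
  also have "\<dots> = (\<Sum>A\<in>?P. \<Sum>F\<in>?P. if sd A F = B then K \<eta> A F * x A * (\<Sum>C\<in>?P. \<Sum>E\<in>?P.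
      if sd C E = F then K \<eta> C E * y C * z E else 0) else 0)"
    unfolding if_sum2' by (intro sum.cong refl; simp)
  also have "\<dots> = cl_mult n \<eta> x (cl_mult n \<eta> y z) B"
    unfolding mult_eq ..
  finally show "cl_mult n \<eta> (cl_mult n \<eta> x y) z B = cl_mult n \<eta> x (cl_mult n \<eta> y z) B" .
qed



lemma if_eqI: "(c \<Longrightarrow> a = b) \<Longrightarrow> (if c then a else 0) = (if c then b else 0)"
  by auto

abbreviation PP :: "nat \<Rightarrow> nat set set" where "PP n \<equiv> Pow {..<n}"

lemma carrier_iff: "x \<in> cl_carrier n \<longleftrightarrow> (\<forall>A. A \<notin> PP n \<longrightarrow> x A = 0)"
  unfolding cl_carrier_def by auto

lemma mult_carrier [simp]: "cl_mult n \<eta> x y \<in> cl_carrier n"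
  unfolding carrier_iff
proof (intro allI impI)
  fix B assume "B \<notin> PP n"
  hence "\<And>A C. A \<in> PP n \<Longrightarrow> C \<in> PP n \<Longrightarrow> sd A C \<noteq> B" by auto
  thus "cl_mult n \<eta> x y B = 0" unfolding mult_eq by (simp add: sum.neutral)
qed

lemma K_empty_left [simp]: "K \<eta> {} C = 1"
  unfolding K_def blade_sign_def by simp

lemma K_empty_right [simp]: "K \<eta> A {} = 1"
  unfolding K_def blade_sign_def by simp

lemma one_carrier [simp]: "cl_one \<in> cl_carrier n"
  unfolding cl_carrier_def cl_one_def by auto

lemma mult_one_left:
  assumes "x \<in> cl_carrier n"
  shows "cl_mult n \<eta> cl_one x = x"
proof (rule ext)
  fix B
  have "cl_mult n \<eta> cl_one x B = (\<Sum>A\<in>PP n. if A = {} then (\<Sum>C\<in>PP n.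
      if sd A C = B then K \<eta> A C * 1 * x C else 0) else 0)"
    unfolding mult_eq cl_one_def
  proof (intro sum.cong refl)
    fix A show "(\<Sum>C\<in>PP n. if sd A C = B then K \<eta> A C * (if A = {} then 1 else 0) * x C else 0) =
      (if A = {} then \<Sum>C\<in>PP n. if sd A C = B then K \<eta> A C * 1 * x C else 0 else 0)"
      by (cases "A = {}") (simp_all cong: if_cong)
  qed
  also have "\<dots> = (\<Sum>C\<in>PP n. if C = B then x C else 0)"
    by simp
  also have "\<dots> = x B" using assms unfolding carrier_iff by auto
  finally show "cl_mult n \<eta> cl_one x B = x B" .
qed

lemma mult_one_right:
  assumes "x \<in> cl_carrier n"
  shows "cl_mult n \<eta> x cl_one = x"
proof (rule ext)
  fix B
  have "cl_mult n \<eta> x cl_one B = (\<Sum>A\<in>PP n. (\<Sum>C\<in>PP n. if C = {} then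
      (if sd A C = B then K \<eta> A C * x A * 1 else 0) else 0))"
    unfolding mult_eq cl_one_def by (intro sum.cong refl) auto
  also have "\<dots> = (\<Sum>A\<in>PP n. if A = B then x A else 0)"
    by (intro sum.cong refl) simp
  also have "\<dots> = x B" using assms unfolding carrier_iff by auto
  finally show "cl_mult n \<eta> x cl_one B = x B" .
qed

lemma mult_smul_left: "cl_mult n \<eta> (cl_smul c x) y = cl_smul c (cl_mult n \<eta> x y)"
  unfolding cl_smul_def mult_eq
  by (rule ext) (simp add: sum_distrib_left if_distrib ac_simps cong: if_cong)

lemma mult_smul_right: "cl_mult n \<eta> x (cl_smul c y) = cl_smul c (cl_mult n \<eta> x y)"
  unfolding cl_smul_def mult_eq
  by (rule ext) (simp add: sum_distrib_left if_distrib ac_simps cong: if_cong)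

lemma mult_add_left: "cl_mult n \<eta> (cl_add x y) z = cl_add (cl_mult n \<eta> x z) (cl_mult n \<eta> y z)"
  unfolding cl_add_def mult_eq
  by (rule ext) (simp add: sum.distrib[symmetric] distrib_left distrib_right if_distrib cong: if_cong)

lemma mult_add_right: "cl_mult n \<eta> x (cl_add y z) = cl_add (cl_mult n \<eta> x y) (cl_mult n \<eta> x z)"
  unfolding cl_add_def mult_eq
  by (rule ext) (simp add: sum.distrib[symmetric] distrib_left distrib_right if_distrib cong: if_cong)

lemma mult_blade:
  assumes "A \<in> PP n" "C \<in> PP n"
  shows "cl_mult n \<eta> (cl_blade A) (cl_blade C) = cl_smul (K \<eta> A C) (cl_blade (sd A C))"
proof (rule ext)
  fix B
  have "cl_mult n \<eta> (cl_blade A) (cl_blade C) B = (\<Sum>A'\<in>PP n. \<Sum>C'\<in>PP n. if A' = A then (if C' = C then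
     (if sd A' C' = B then K \<eta> A' C' else 0) else 0) else 0)"
    unfolding mult_eq cl_blade_def
  proof (intro sum.cong refl)
    fix A' C'
    show "(if sd A' C' = B then K \<eta> A' C' * (if A' = A then 1 else 0) * (if C' = C then 1 else 0) else 0) =
      (if A' = A then (if C' = C then (if sd A' C' = B then K \<eta> A' C' else 0) else 0) else 0)"
      by simp
  qed
  also have "\<dots> = (\<Sum>A'\<in>PP n. if A' = A then (\<Sum>C'\<in>PP n. if C' = C then
     (if sd A' C' = B then K \<eta> A' C' else 0) else 0) else 0)"
    by (intro sum.cong refl) simp
  also have "\<dots> = (\<Sum>C'\<in>PP n. if C' = C then (if sd A C' = B then K \<eta> A C' else 0) else 0)"
    using assms(1) by simp
  also have "\<dots> = (if sd A C = B then K \<eta> A C else 0)" using assms(2) by simp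
  finally show "cl_mult n \<eta> (cl_blade A) (cl_blade C) B = cl_smul (K \<eta> A C) (cl_blade (sd A C)) B"
    unfolding cl_smul_def cl_blade_def by auto
qed

definition gi :: "'a::comm_ring_1 clf \<Rightarrow> 'a clf" where
  "gi x = (\<lambda>A. (-1) ^ card A * x A)"

lemma PP_finite: "A \<in> PP n \<Longrightarrow> finite A"
  by (auto intro: finite_subset)

lemma gi_mult: "gi (cl_mult n \<eta> x y) = cl_mult n \<eta> (gi x) (gi y)"
proof (rule ext)
  fix B
  have "gi (cl_mult n \<eta> x y) B = (\<Sum>A\<in>PP n. \<Sum>C\<in>PP n.
      if sd A C = B then (-1) ^ card B * (K \<eta> A C * x A * y C) else 0)"
    unfolding gi_def mult_eq by (simp add: sum_distrib_left if_distrib cong: if_cong)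
  also have "\<dots> = (\<Sum>A\<in>PP n. \<Sum>C\<in>PP n.
      if sd A C = B then K \<eta> A C * ((-1) ^ card A * x A) * ((-1) ^ card C * y C) else 0)"
  proof (intro sum.cong refl if_eqI)
    fix A C assume "A \<in> PP n" "C \<in> PP n" "sd A C = B"
    thus "(-1) ^ card B * (K \<eta> A C * x A * y C) = K \<eta> A C * ((-1) ^ card A * x A) * ((-1) ^ card C * y C)"
      using par_sd[of A C, where 'a='a] by (simp add: PP_finite ac_simps)
  qed
  also have "\<dots> = cl_mult n \<eta> (gi x) (gi y) B"
    unfolding gi_def mult_eq ..
  finally show "gi (cl_mult n \<eta> x y) B = cl_mult n \<eta> (gi x) (gi y) B" .
qed

lemma K_rev:
  assumes "finite A" "finite C"
  shows "S (sd A C) (sd A C) * K \<eta> A C = S A A * S C C * (K \<eta> C A :: 'a::comm_ring_1)"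
proof -
  have f: "finite (sd A C)" using assms by auto
  have "S (sd A C) (sd A C) = (S A A * S A C) * (S C A * (S C C :: 'a))"
    unfolding S_sd_left[OF assms] S_sd_right[OF assms] by (simp add: ac_simps)
  moreover have "S A C * S A C = (1::'a)" by (rule S_sq)
  ultimately have h: "S (sd A C) (sd A C) * S A C = S A A * S C C * (S C A :: 'a)"
    by (metis (no_types, lifting) mult.assoc mult.commute mult_1_right)
  have "S (sd A C) (sd A C) * K \<eta> A C = (S (sd A C) (sd A C) * S A C) * (\<Prod>k\<in>A \<inter> C. \<eta> k)"
    unfolding K_def blade_sign_S[OF assms] by (simp only: mult.assoc)
  also have "\<dots> = S A A * S C C * (S C A * (\<Prod>k\<in>C \<inter> A. \<eta> k))"
    unfolding h by (simp only: mult.assoc Int_commute)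
  also have "\<dots> = S A A * S C C * K \<eta> C A"
    unfolding K_def blade_sign_S[OF assms(2,1)] ..
  finally show ?thesis .
qed

lemma rev_eq: "cl_rev x = (\<lambda>A. (if finite A then S A A else (-1) ^ (card A * (card A - 1) div 2)) * x A)"
  unfolding cl_rev_def
proof (rule ext)
  fix A show "(-1) ^ (card A * (card A - 1) div 2) * x A =
    (if finite A then S A A else (-1) ^ (card A * (card A - 1) div 2)) * x A"
    using rev_sign[of A, where 'a='a] by (cases "finite A") simp_all
qed

lemma rev_mult: fixes x :: "'a::comm_ring_1 clf" shows "cl_rev (cl_mult n \<eta> x y) = cl_mult n \<eta> (cl_rev y) (cl_rev x)"
proof (rule ext)
  fix B
  have "cl_rev (cl_mult n \<eta> x y) B = (\<Sum>A\<in>PP n. \<Sum>C\<in>PP n.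
      if sd A C = B then cl_rev (\<lambda>_. 1) B * (K \<eta> A C * x A * y C) else 0)"
    unfolding mult_eq cl_rev_def by (simp add: sum_distrib_left if_distrib cong: if_cong)
  also have "\<dots> = (\<Sum>A\<in>PP n. \<Sum>C\<in>PP n.
      if sd C A = B then K \<eta> C A * (S C C * y C) * (S A A * x A) else 0)"
  proof (intro sum.cong refl)
    fix A C assume a: "A \<in> PP n" "C \<in> PP n"
    have e: "sd C A = sd A C" by auto
    show "(if sd A C = B then cl_rev (\<lambda>_. 1) B * (K \<eta> A C * x A * y C) else 0) =
      (if sd C A = B then K \<eta> C A * (S C C * y C) * (S A A * x A) else 0)"
      unfolding e
    proof (rule if_eqI)
      assume "sd A C = B"
      hence "cl_rev (\<lambda>_. 1::'a) B = S (sd A C) (sd A C)" using a unfolding rev_eq by (auto simp: PP_finite)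
      moreover have "S (sd A C) (sd A C) * K \<eta> A C = S A A * S C C * K \<eta> C A"
        using K_rev[of A C \<eta>] a by (simp add: PP_finite)
      ultimately have e: "cl_rev (\<lambda>_. 1) B * K \<eta> A C = S A A * S C C * K \<eta> C A"
        by simp
      have "cl_rev (\<lambda>_. 1) B * (K \<eta> A C * x A * y C) = (cl_rev (\<lambda>_. 1) B * K \<eta> A C) * x A * y C"
        by (simp only: mult.assoc)
      also have "\<dots> = S A A * S C C * K \<eta> C A * x A * y C" unfolding e ..
      also have "\<dots> = K \<eta> C A * (S C C * y C) * (S A A * x A)" by (simp only: mult_ac)
      finally show "cl_rev (\<lambda>_. 1) B * (K \<eta> A C * x A * y C) = K \<eta> C A * (S C C * y C) * (S A A * x A)" .
    qed
  qed
  also have "\<dots> = (\<Sum>C\<in>PP n. \<Sum>A\<in>PP n.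
      if sd C A = B then K \<eta> C A * (S C C * y C) * (S A A * x A) else 0)"
    by (rule sum.swap)
  also have "\<dots> = cl_mult n \<eta> (cl_rev y) (cl_rev x) B"
    unfolding rev_eq mult_eq by (intro sum.cong refl) (simp add: PP_finite)
  finally show "cl_rev (cl_mult n \<eta> x y) B = cl_mult n \<eta> (cl_rev y) (cl_rev x) B" .
qed



lemma units_carrier: "x \<in> cl_units n \<eta> \<Longrightarrow> x \<in> cl_carrier n"
  unfolding cl_units_def by auto

lemma inv_props:
  assumes "x \<in> cl_units n \<eta>"
  shows "cl_inv n \<eta> x \<in> cl_carrier n" "cl_mult n \<eta> x (cl_inv n \<eta> x) = cl_one"
        "cl_mult n \<eta> (cl_inv n \<eta> x) x = cl_one"
proof -
  from assms obtain y where "y \<in> cl_carrier n \<and> cl_mult n \<eta> x y = cl_one \<and> cl_mult n \<eta> y x = cl_one"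
    unfolding cl_units_def by auto
  hence "cl_inv n \<eta> x \<in> cl_carrier n \<and> cl_mult n \<eta> x (cl_inv n \<eta> x) = cl_one \<and> cl_mult n \<eta> (cl_inv n \<eta> x) x = cl_one"
    unfolding cl_inv_def by (rule someI[where P="\<lambda>y. y \<in> cl_carrier n \<and> cl_mult n \<eta> x y = cl_one \<and> cl_mult n \<eta> y x = cl_one"])
  thus "cl_inv n \<eta> x \<in> cl_carrier n" "cl_mult n \<eta> x (cl_inv n \<eta> x) = cl_one"
        "cl_mult n \<eta> (cl_inv n \<eta> x) x = cl_one" by auto
qed

lemma inv_unique:
  assumes "x \<in> cl_units n \<eta>" "y \<in> cl_carrier n" "cl_mult n \<eta> x y = cl_one"
  shows "cl_inv n \<eta> x = y"
proof -
  have "cl_inv n \<eta> x = cl_mult n \<eta> (cl_inv n \<eta> x) (cl_mult n \<eta> x y)"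
    using assms inv_props[OF assms(1)] by (simp add: mult_one_right)
  also have "\<dots> = y" unfolding cl_assoc[symmetric] inv_props[OF assms(1)]
    using assms(2) by (rule mult_one_left)
  finally show ?thesis .
qed

lemma unitsI:
  assumes "x \<in> cl_carrier n" "y \<in> cl_carrier n" "cl_mult n \<eta> x y = cl_one" "cl_mult n \<eta> y x = cl_one"
  shows "x \<in> cl_units n \<eta>"
  unfolding cl_units_def using assms by auto

lemma mult_blade_right:
  assumes "C \<in> PP n"
  shows "cl_mult n \<eta> z (cl_blade C) B = (if B \<in> PP n then K \<eta> (sd B C) C * z (sd B C) else 0)"
proof -
  have "cl_mult n \<eta> z (cl_blade C) B = (\<Sum>A\<in>PP n. \<Sum>C'\<in>PP n. if C' = C then
     (if sd A C' = B then K \<eta> A C' * z A else 0) else 0)"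
    unfolding mult_eq cl_blade_def by (intro sum.cong refl) simp
  also have "\<dots> = (\<Sum>A\<in>PP n. if sd B C = A then K \<eta> A C * z A else 0)"
    using assms by (intro sum.cong refl) auto
  also have "\<dots> = (if B \<in> PP n then K \<eta> (sd B C) C * z (sd B C) else 0)"
    using assms by auto
  finally show ?thesis .
qed

lemma mult_blade_left:
  assumes "C \<in> PP n"
  shows "cl_mult n \<eta> (cl_blade C) z B = (if B \<in> PP n then K \<eta> C (sd C B) * z (sd C B) else 0)"
proof -
  have "cl_mult n \<eta> (cl_blade C) z B = (\<Sum>A\<in>PP n. if A = C then (\<Sum>C'\<in>PP n.
     (if sd A C' = B then K \<eta> A C' * z C' else 0)) else 0)"
    unfolding mult_eq cl_blade_def by (intro sum.cong refl) (simp cong: if_cong)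
  also have "\<dots> = (\<Sum>C'\<in>PP n. if sd C B = C' then K \<eta> C C' * z C' else 0)"
    using assms
  proof -
    have "(\<Sum>A\<in>PP n. if A = C then (\<Sum>C'\<in>PP n.
     (if sd A C' = B then K \<eta> A C' * z C' else 0)) else 0) = (\<Sum>C'\<in>PP n.
     (if sd C C' = B then K \<eta> C C' * z C' else 0))" using assms by simp
    also have "\<dots> = (\<Sum>C'\<in>PP n. if sd C B = C' then K \<eta> C C' * z C' else 0)"
      by (intro sum.cong refl) auto
    finally show ?thesis .
  qed
  also have "\<dots> = (if B \<in> PP n then K \<eta> C (sd C B) * z (sd C B) else 0)"
    using assms by auto
  finally show ?thesis .
qed

lemma S_single_swap:
  assumes "finite A"
  shows "S A {i} * S {i} A = ((-1::'a::comm_ring_1) ^ card (A - {i}))"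
proof -
  have "S A {i} * S {i} A = (\<Prod>a\<in>A. sg a i * (sg i a :: 'a))"
    unfolding S_def by (simp add: prod.distrib)
  also have "\<dots> = (\<Prod>a\<in>A. if a = i then 1 else -1)"
    by (intro prod.cong refl) (auto simp: sg_def)
  also have "\<dots> = (-1) ^ card (A - {i})"
    using assms by (simp add: prod.If_cases Diff_eq Int_commute)
  finally show ?thesis .
qed

lemma neg1_pow_eq1:
  "((-1::'a::{idom,ring_char_0}) ^ k = 1) \<longleftrightarrow> even k"
  by (simp add: minus_one_power_iff)

lemma center_grade0:
  fixes z :: "'a::field_char_0 clf"
  assumes z: "z \<in> cl_carrier n" and ev: "even n"
    and eta: "\<And>i. i < n \<Longrightarrow> \<eta> i \<noteq> 0"
    and comm: "\<And>i. i < n \<Longrightarrow> cl_mult n \<eta> z (cl_blade {i}) = cl_mult n \<eta> (cl_blade {i}) z"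
  shows "z \<in> cl_grade n 0"
  unfolding cl_grade_def
proof (intro CollectI conjI allI impI z)
  fix A assume nz: "z A \<noteq> 0"
  hence AP: "A \<in> PP n" using z unfolding carrier_iff by auto
  hence fA: "finite A" by (rule PP_finite)
  have odd_i: "even (card (A - {i}))" if i: "i < n" for i
  proof -
    have iP: "{i} \<in> PP n" using i by auto
    have B: "sd A {i} \<in> PP n" using AP i by auto
    have e2: "sd (sd A {i}) {i} = A" "sd {i} (sd A {i}) = A" by auto
    have "cl_mult n \<eta> z (cl_blade {i}) (sd A {i}) = cl_mult n \<eta> (cl_blade {i}) z (sd A {i})"
      using comm[OF i] by simp
    hence "K \<eta> A {i} * z A = K \<eta> {i} A * z A"
      unfolding mult_blade_right[OF iP] mult_blade_left[OF iP] using B e2 by simp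
    hence "K \<eta> A {i} = K \<eta> {i} A" using nz by simp
    moreover have "(\<Prod>k\<in>A \<inter> {i}. \<eta> k) \<noteq> 0"
      using AP eta by (auto simp: prod_zero_iff fA)
    ultimately have "S A {i} = (S {i} A :: 'a)"
      unfolding K_def blade_sign_S[OF fA finite.insertI[OF finite.emptyI]] blade_sign_S[OF finite.insertI[OF finite.emptyI] fA]
      by (simp add: Int_commute)
    hence "S A {i} * S {i} A = (S A {i} * S A {i} :: 'a)" by simp
    also have "\<dots> = 1" by (rule S_sq)
    finally have "S A {i} * S {i} A = (1::'a)" .
    hence "(-1::'a) ^ card (A - {i}) = 1" using S_single_swap[OF fA, of i, where 'a='a] by simp
    thus ?thesis by (simp add: neg1_pow_eq1)
  qed
  show "card A = 0"
  proof (rule ccontr)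
    assume "card A \<noteq> 0"
    then obtain a where a: "a \<in> A" by (metis card.empty ex_in_conv)
    show False
    proof (cases "even (card A)")
      case True
      have "a < n" using a AP by auto
      from odd_i[OF this] a fA True show False by (simp add: card_Diff_singleton)
    next
      case False
      have "A \<noteq> {..<n}" using False ev by auto
      with AP obtain i where i: "i < n" "i \<notin> A" by auto
      from odd_i[OF i(1)] i(2) False show False by simp
    qed
  qed
qed



lemma smul_carrier [simp]: "(x::'a::comm_ring_1 clf) \<in> cl_carrier n \<Longrightarrow> cl_smul c x \<in> cl_carrier n"
  unfolding carrier_iff cl_smul_def by auto

lemma add_carrier [simp]: "(x::'a::comm_ring_1 clf) \<in> cl_carrier n \<Longrightarrow> y \<in> cl_carrier n \<Longrightarrow> cl_add x y \<in> cl_carrier n"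
  unfolding carrier_iff cl_add_def by auto

lemma gi_carrier [simp]: "x \<in> cl_carrier n \<Longrightarrow> gi x \<in> cl_carrier n"
  unfolding carrier_iff gi_def by auto

lemma rev_carrier [simp]: "x \<in> cl_carrier n \<Longrightarrow> cl_rev x \<in> cl_carrier n"
  unfolding carrier_iff cl_rev_def by auto

lemma blade_carrier [simp]: "A \<in> PP n \<Longrightarrow> cl_blade A \<in> cl_carrier n"
  unfolding carrier_iff cl_blade_def by auto

lemma grade_carrier: "x \<in> cl_grade n k \<Longrightarrow> x \<in> cl_carrier n"
  unfolding cl_grade_def by auto

lemma blade_grade: "A \<in> PP n \<Longrightarrow> card A = k \<Longrightarrow> cl_blade A \<in> cl_grade n k"
  unfolding cl_grade_def cl_blade_def carrier_iff by auto

lemma smul_grade: "(x::'a::comm_ring_1 clf) \<in> cl_grade n k \<Longrightarrow> cl_smul c x \<in> cl_grade n k"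
  unfolding cl_grade_def cl_smul_def carrier_iff by (auto simp: mult_zero_right) (metis mult_zero_right)

lemma gi_gi [simp]: "gi (gi x) = x"
  unfolding gi_def by (auto simp: power_mult_distrib[symmetric])

lemma rev_rev [simp]: "cl_rev (cl_rev x) = x"
  unfolding cl_rev_def by (auto simp: power_mult_distrib[symmetric])

lemma gi_one [simp]: "gi cl_one = cl_one"
  unfolding gi_def cl_one_def by auto

lemma rev_one [simp]: "cl_rev cl_one = cl_one"
  unfolding cl_rev_def cl_one_def by auto

lemma gi_smul: "gi (cl_smul c x) = cl_smul c (gi x)"
  unfolding gi_def cl_smul_def by (auto simp: ac_simps)

lemma rev_smul: "cl_rev (cl_smul c x) = cl_smul c (cl_rev x)"
  unfolding cl_rev_def cl_smul_def by (auto simp: ac_simps)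

lemma gi_rev: "gi (cl_rev x) = cl_rev (gi x)"
  unfolding cl_rev_def gi_def by (auto simp: ac_simps)

lemma smul_smul [simp]: "cl_smul a (cl_smul b (x::'a::comm_ring_1 clf)) = cl_smul (a * b) x"
  unfolding cl_smul_def by (simp add: mult.assoc)

lemma smul_1 [simp]: "cl_smul 1 (x::'a::comm_ring_1 clf) = x"
  unfolding cl_smul_def by auto

lemma grade3_gi: "U \<in> cl_grade n 3 \<Longrightarrow> gi U = cl_smul (-1) U"
  unfolding gi_def cl_smul_def
proof (rule ext)
  fix A assume "U \<in> cl_grade n 3"
  thus "(-1) ^ card A * U A = -1 * U A" unfolding cl_grade_def by (cases "U A = 0") auto
qed

lemma grade3_rev: "U \<in> cl_grade n 3 \<Longrightarrow> cl_rev U = cl_smul (-1) U"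
  unfolding cl_rev_def cl_smul_def
proof (rule ext)
  fix A assume "U \<in> cl_grade n 3"
  thus "(-1) ^ (card A * (card A - 1) div 2) * U A = -1 * U A" unfolding cl_grade_def by (cases "U A = 0") auto
qed

lemma blade1_gi: "gi (cl_blade {i}) = cl_smul (-1) (cl_blade {i})"
  unfolding gi_def cl_blade_def cl_smul_def by auto

lemma blade1_rev: "cl_rev (cl_blade {i}) = cl_blade {i}"
  unfolding cl_rev_def cl_blade_def by auto

lemma cancel_left:
  assumes "cl_mult n \<eta> xi x = cl_one" "w \<in> cl_carrier n"
  shows "cl_mult n \<eta> xi (cl_mult n \<eta> x w) = w"
  using assms by (simp add: cl_assoc[symmetric] mult_one_left)



lemma phi_mult:
  assumes "cl_mult n \<eta> Ti T = cl_one" "y \<in> cl_carrier n"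
  shows "cl_mult n \<eta> (cl_mult n \<eta> T (cl_mult n \<eta> x y)) Ti =
         cl_mult n \<eta> (cl_mult n \<eta> (cl_mult n \<eta> T x) Ti) (cl_mult n \<eta> (cl_mult n \<eta> T y) Ti)"
  using assms by (simp add: cl_assoc cancel_left)

lemma phi_smul:
  "cl_mult n \<eta> (cl_mult n \<eta> T (cl_smul c x)) Ti = cl_smul c (cl_mult n \<eta> (cl_mult n \<eta> T x) Ti)"
  by (simp add: mult_smul_left mult_smul_right)

lemma gi_mult3: "gi (cl_mult n \<eta> (cl_mult n \<eta> p q) r) = cl_mult n \<eta> (cl_mult n \<eta> (gi p) (gi q)) (gi r)"
  by (simp only: gi_mult)

lemma rev_mult3: "cl_rev (cl_mult n \<eta> (cl_mult n \<eta> p q) r) = cl_mult n \<eta> (cl_rev r) (cl_mult n \<eta> (cl_rev q) (cl_rev p))"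
  by (simp only: rev_mult)

lemma phi3:
  fixes T :: "'a::comm_ring_1 clf"
  assumes inv: "cl_mult n \<eta> Ti T = cl_one"
    and U: "U1 \<in> cl_grade n 3" "U2 \<in> cl_grade n 3" "U3 \<in> cl_grade n 3"
    and fU: "cl_mult n \<eta> (cl_mult n \<eta> T U1) Ti \<in> cl_grade n 3"
            "cl_mult n \<eta> (cl_mult n \<eta> T U2) Ti \<in> cl_grade n 3"
            "cl_mult n \<eta> (cl_mult n \<eta> T U3) Ti \<in> cl_grade n 3"
    and X: "X = cl_mult n \<eta> (cl_mult n \<eta> U1 U2) U3"
  shows "gi (cl_mult n \<eta> (cl_mult n \<eta> T X) Ti) = cl_mult n \<eta> (cl_mult n \<eta> T (gi X)) Ti"
    and "cl_rev (cl_mult n \<eta> (cl_mult n \<eta> T X) Ti) = cl_mult n \<eta> (cl_mult n \<eta> T (cl_rev X)) Ti"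
proof -
  let ?f = "\<lambda>x. cl_mult n \<eta> (cl_mult n \<eta> T x) Ti"
  have c: "U1 \<in> cl_carrier n" "U2 \<in> cl_carrier n" "U3 \<in> cl_carrier n"
    using U by (auto intro: grade_carrier)
  have m: "\<And>x y. y \<in> cl_carrier n \<Longrightarrow> ?f (cl_mult n \<eta> x y) = cl_mult n \<eta> (?f x) (?f y)"
    by (rule phi_mult[OF inv])
  have fX: "?f X = cl_mult n \<eta> (cl_mult n \<eta> (?f U1) (?f U2)) (?f U3)"
    unfolding X using c by (simp add: m)
  have gX: "gi X = cl_smul (-1) X"
    unfolding X gi_mult grade3_gi[OF U(1)] grade3_gi[OF U(2)] grade3_gi[OF U(3)]
    by (simp add: mult_smul_left mult_smul_right)
  have "gi (?f X) = cl_mult n \<eta> (cl_mult n \<eta> (gi (?f U1)) (gi (?f U2))) (gi (?f U3))"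
    unfolding fX by (rule gi_mult3)
  also have "\<dots> = cl_smul (-1) (?f X)"
    unfolding fX grade3_gi[OF fU(1)] grade3_gi[OF fU(2)] grade3_gi[OF fU(3)]
    by (simp add: mult_smul_left mult_smul_right)
  also have "\<dots> = ?f (gi X)" unfolding gX phi_smul ..
  finally show "gi (?f X) = ?f (gi X)" .
  have rX: "cl_rev X = cl_smul (-1) (cl_mult n \<eta> U3 (cl_mult n \<eta> U2 U1))"
    unfolding X rev_mult grade3_rev[OF U(1)] grade3_rev[OF U(2)] grade3_rev[OF U(3)]
    by (simp add: mult_smul_left mult_smul_right)
  have fX': "?f (cl_mult n \<eta> U3 (cl_mult n \<eta> U2 U1)) = cl_mult n \<eta> (?f U3) (cl_mult n \<eta> (?f U2) (?f U1))"
    using c by (simp add: m)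
  have "cl_rev (?f X) = cl_mult n \<eta> (cl_rev (?f U3)) (cl_mult n \<eta> (cl_rev (?f U2)) (cl_rev (?f U1)))"
    unfolding fX by (rule rev_mult3)
  also have "\<dots> = cl_smul (-1) (cl_mult n \<eta> (?f U3) (cl_mult n \<eta> (?f U2) (?f U1)))"
    unfolding grade3_rev[OF fU(1)] grade3_rev[OF fU(2)] grade3_rev[OF fU(3)]
    by (simp add: mult_smul_left mult_smul_right)
  also have "\<dots> = ?f (cl_rev X)" unfolding rX phi_smul fX' ..
  finally show "cl_rev (?f X) = ?f (cl_rev X)" .
qed

lemma K_nonzero:
  fixes \<eta> :: "nat \<Rightarrow> 'a::field"
  assumes "A \<in> PP n" "C \<in> PP n" "\<And>i. i < n \<Longrightarrow> \<eta> i \<noteq> 0"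
  shows "K \<eta> A C \<noteq> 0"
  unfolding K_def blade_sign_def using assms by (auto simp: prod_zero_iff PP_finite)

lemma blade1_prod:
  fixes \<eta> :: "nat \<Rightarrow> 'a::field"
  assumes eta: "\<And>i. i < n \<Longrightarrow> \<eta> i \<noteq> 0"
    and d: "distinct [i,a,b,c,d]" and lt: "i < n" "a < n" "b < n" "c < n" "d < n"
  shows "\<exists>U1 U2 U3 \<kappa>. U1 \<in> cl_grade n 3 \<and> U2 \<in> cl_grade n 3 \<and> U3 \<in> cl_grade n 3 \<and>
     cl_blade {i} = cl_smul \<kappa> (cl_mult n \<eta> (cl_mult n \<eta> U1 U2) U3)"
proof -
  let ?A = "{i,a,b}" and ?B = "{a,c,d}" and ?C = "{b,c,d}"
  have P: "?A \<in> PP n" "?B \<in> PP n" "?C \<in> PP n" "{i,b,c,d} \<in> PP n" using lt by auto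
  have s1: "sd ?A ?B = {i,b,c,d}" using d by auto
  have s2: "sd {i,b,c,d} ?C = {i}" using d by auto
  define k where "k = K \<eta> ?A ?B * K \<eta> {i,b,c,d} ?C"
  have eq: "cl_mult n \<eta> (cl_mult n \<eta> (cl_blade ?A) (cl_blade ?B)) (cl_blade ?C) =
     cl_smul k (cl_blade {i})"
    unfolding k_def mult_blade[OF P(1,2)] s1 mult_smul_left mult_blade[OF P(4,3)] s2 by simp
  have "k \<noteq> 0" unfolding k_def by (simp add: K_nonzero[OF P(1) P(2) eta] K_nonzero[OF P(4) P(3) eta])
  hence "inverse k * k = 1" by simp
  hence "cl_blade {i} = cl_smul (inverse k)
     (cl_mult n \<eta> (cl_mult n \<eta> (cl_blade ?A) (cl_blade ?B)) (cl_blade ?C))"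
    unfolding eq smul_smul by simp
  moreover have "cl_blade ?A \<in> cl_grade n 3" "cl_blade ?B \<in> cl_grade n 3" "cl_blade ?C \<in> cl_grade n 3"
    using P d by (auto intro!: blade_grade)
  ultimately show ?thesis by blast
qed

lemma blade1_prod6:
  fixes \<eta> :: "nat \<Rightarrow> 'a::field"
  assumes eta: "\<And>i. i < 6 \<Longrightarrow> \<eta> i \<noteq> 0" and i: "i < 6"
  shows "\<exists>U1 U2 U3 \<kappa>. U1 \<in> cl_grade 6 3 \<and> U2 \<in> cl_grade 6 3 \<and> U3 \<in> cl_grade 6 3 \<and>
     cl_blade {i} = cl_smul \<kappa> (cl_mult 6 \<eta> (cl_mult 6 \<eta> U1 U2) U3)"
proof -
  have "i = 0 \<or> i = 1 \<or> i = 2 \<or> i = 3 \<or> i = 4 \<or> i = 5" using i by auto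
  thus ?thesis
  proof (elim disjE)
    assume "i = 0" thus ?thesis using blade1_prod[OF eta, where i=0 and a=1 and b=2 and c=3 and d=4] by simp
  next
    assume "i = 1" thus ?thesis using blade1_prod[OF eta, where i=1 and a=0 and b=2 and c=3 and d=4] by simp
  next
    assume "i = 2" thus ?thesis using blade1_prod[OF eta, where i=2 and a=0 and b=1 and c=3 and d=4] by simp
  next
    assume "i = 3" thus ?thesis using blade1_prod[OF eta, where i=3 and a=0 and b=1 and c=2 and d=4] by simp
  next
    assume "i = 4" thus ?thesis using blade1_prod[OF eta, where i=4 and a=0 and b=1 and c=2 and d=3] by simp
  next
    assume "i = 5" thus ?thesis using blade1_prod[OF eta, where i=5 and a=0 and b=1 and c=2 and d=3] by simp
  qed
qed



lemma grade0_eq: "(x::'a::comm_ring_1 clf) \<in> cl_grade n 0 \<Longrightarrow> x = cl_smul (x {}) cl_one"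
  unfolding cl_smul_def cl_one_def
proof (rule ext)
  fix A assume x: "x \<in> cl_grade n 0"
  show "x A = x {} * (if A = {} then 1 else 0)"
  proof (cases "x A = 0")
    case False
    hence "A \<subseteq> {..<n}" "card A = 0" using x unfolding cl_grade_def carrier_iff by auto
    hence "A = {}" by (meson card_0_eq finite_lessThan finite_subset)
    thus ?thesis by simp
  next
    case True
    thus ?thesis by auto
  qed
qed

lemma mult_zero_l: "cl_mult n \<eta> (\<lambda>_. 0) y = (\<lambda>_. 0)"
  unfolding mult_eq by (rule ext) (simp cong: if_cong)

lemma one_neq_zero: "cl_one \<noteq> (\<lambda>_. (0::'a::comm_ring_1))"
  unfolding cl_one_def by (metis one_neq_zero)

lemma one_units: "cl_one \<in> cl_units n \<eta>"
  by (rule unitsI[of _ _ cl_one]) (simp_all add: mult_one_left)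

lemma one_grade0: "cl_one \<in> cl_grade n 0"
  unfolding cl_grade_def cl_one_def by (auto simp: carrier_iff)

lemma neg1_pow_eq: "((-1::'a::{idom,ring_char_0}) ^ a = (-1) ^ b) \<longleftrightarrow> (even a \<longleftrightarrow> even b)"
  by (cases "even a"; cases "even b") (simp_all add: minus_one_power_iff)

lemma smul_neg_cancel:
  assumes "cl_smul (-1) a = cl_smul (-1) (b::'a::comm_ring_1 clf)"
  shows "a = b"
proof -
  have "a = cl_smul (-1) (cl_smul (-1) a)" by simp
  also have "\<dots> = cl_smul (-1) (cl_smul (-1) b)" unfolding assms ..
  also have "\<dots> = b" by simp
  finally show ?thesis .
qed

lemma gamma3_sub_Q:
  fixes \<eta> :: "nat \<Rightarrow> 'a::field_char_0"
  assumes eta: "\<And>i. i < 6 \<Longrightarrow> \<eta> i \<noteq> 0" and TG: "T \<in> cl_Gamma 6 \<eta> 3"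
  shows "T \<in> cl_Q 6 \<eta>"
proof -
  let ?M = "cl_mult 6 \<eta>"
  have Tu: "T \<in> cl_units 6 \<eta>" using TG unfolding cl_Gamma_def by auto
  define Ti where "Ti = cl_inv 6 \<eta> T"
  have Tc: "T \<in> cl_carrier 6" using Tu by (rule units_carrier)
  have Tic: "Ti \<in> cl_carrier 6" and TTi: "?M T Ti = cl_one" and TiT: "?M Ti T = cl_one"
    using inv_props[OF Tu] unfolding Ti_def by auto
  let ?f = "\<lambda>x. ?M (?M T x) Ti"
  have pres: "\<And>U. U \<in> cl_grade 6 3 \<Longrightarrow> ?f U \<in> cl_grade 6 3"
    using TG unfolding cl_Gamma_def Ti_def by auto
  have comm: "gi (?f (cl_blade {i})) = ?f (gi (cl_blade {i})) \<and>
              cl_rev (?f (cl_blade {i})) = ?f (cl_rev (cl_blade {i}))" if i: "i < 6" for i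
  proof -
    obtain U1 U2 U3 \<kappa> where U: "U1 \<in> cl_grade 6 3" "U2 \<in> cl_grade 6 3" "U3 \<in> cl_grade 6 3"
      and e: "cl_blade {i} = cl_smul \<kappa> (?M (?M U1 U2) U3)"
      using blade1_prod6[where \<eta>=\<eta>, OF eta i] by blast
    note p = phi3[OF TiT U pres[OF U(1)] pres[OF U(2)] pres[OF U(3)] refl]
    show ?thesis unfolding e phi_smul gi_smul rev_smul p by simp
  qed
  define gT where "gT = gi T"
  define gTi where "gTi = gi Ti"
  have gTc: "gT \<in> cl_carrier 6" "gTi \<in> cl_carrier 6" unfolding gT_def gTi_def using Tc Tic by auto
  have g1: "?M gT gTi = cl_one" "?M gTi gT = cl_one"
    unfolding gT_def gTi_def gi_mult[symmetric] TTi TiT by simp_all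
  have r0: "?M (?M (?M T e) Ti) T = ?M T e" if "e \<in> cl_carrier 6" for e
    using that by (simp add: cl_assoc TiT mult_one_right)
  have cg: "?M (?M gTi T) (cl_blade {i}) = ?M (cl_blade {i}) (?M gTi T)" if i: "i < 6" for i
  proof -
    let ?e = "cl_blade {i} :: 'a clf"
    have ec: "?e \<in> cl_carrier 6" using i by simp
    have "gi (?f ?e) = ?M (?M gT (gi ?e)) gTi" unfolding gT_def gTi_def by (rule gi_mult3)
    hence "?f (gi ?e) = ?M (?M gT (gi ?e)) gTi" using comm[OF i] by simp
    hence "cl_smul (-1) (?f ?e) = cl_smul (-1) (?M (?M gT ?e) gTi)"
      unfolding blade1_gi phi_smul mult_smul_left mult_smul_right .
    hence E: "?f ?e = ?M (?M gT ?e) gTi"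
      by (rule smul_neg_cancel)
    have "?M (?M gTi T) ?e = ?M gTi (?M T ?e)" by (simp only: cl_assoc)
    also have "\<dots> = ?M gTi (?M (?f ?e) T)" using r0[OF ec] by simp
    also have "\<dots> = ?M gTi (?M (?M (?M gT ?e) gTi) T)" unfolding E ..
    also have "\<dots> = ?M ?e (?M gTi T)" by (simp add: cl_assoc cancel_left[OF g1(2)])
    finally show ?thesis .
  qed
  have c0: "?M gTi T \<in> cl_grade 6 0"
    by (rule center_grade0[where \<eta>=\<eta>]) (simp_all add: eta cg)
  define \<gamma> where "\<gamma> = ?M gTi T {}"
  have "T = ?M gT (?M gTi T)" by (simp add: cancel_left[OF g1(1)] Tc)
  also have "\<dots> = ?M gT (cl_smul \<gamma> cl_one)" unfolding \<gamma>_def using grade0_eq[OF c0] by simp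
  also have "\<dots> = cl_smul \<gamma> gT" by (simp add: mult_smul_right mult_one_right gTc)
  finally have Teq: "\<And>A. T A = \<gamma> * ((-1) ^ card A * T A)"
    unfolding gT_def gi_def cl_smul_def by (metis (no_types, lifting))
  obtain A0 where A0: "T A0 \<noteq> 0"
  proof -
    have "T \<noteq> (\<lambda>_. 0)"
    proof
      assume "T = (\<lambda>_. 0)"
      hence "?M T Ti = (\<lambda>_. 0)" by (simp add: mult_zero_l)
      thus False using TTi one_neq_zero by metis
    qed
    thus ?thesis using that by blast
  qed
  have par: "even (card A) \<longleftrightarrow> even (card A0)" if "T A \<noteq> 0" for A
  proof -
    have "\<gamma> * (-1) ^ card A = 1" using Teq[of A] that
      by (metis (no_types, lifting) mult.assoc mult_cancel_right1)
    moreover have "\<gamma> * (-1) ^ card A0 = 1" using Teq[of A0] A0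
      by (metis (no_types, lifting) mult.assoc mult_cancel_right1)
    ultimately have "(-1::'a) ^ card A = (-1) ^ card A0"
      by (metis mult_cancel_left zero_neq_one mult_zero_left)
    thus ?thesis by (simp add: neg1_pow_eq)
  qed
  have TP: "T \<in> cl_P 6 \<eta>"
  proof -
    have "T \<in> cl_even 6 \<or> T \<in> cl_odd 6"
      unfolding cl_even_def cl_odd_def using Tc par by (cases "even (card A0)") auto
    moreover have "T = ?M cl_one T" by (simp add: mult_one_left Tc)
    moreover have "cl_one \<in> cl_units 6 \<eta> \<inter> cl_center 6"
      unfolding cl_center_def by (simp add: one_units one_grade0)
    ultimately show ?thesis unfolding cl_P_def using Tu by blast
  qed
  define rT where "rT = cl_rev T"
  define rTi where "rTi = cl_rev Ti"
  have rTc: "rT \<in> cl_carrier 6" "rTi \<in> cl_carrier 6" unfolding rT_def rTi_def using Tc Tic by auto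
  have r1: "?M rT rTi = cl_one" "?M rTi rT = cl_one"
    unfolding rT_def rTi_def rev_mult[symmetric] TTi TiT by simp_all
  have cr: "?M (?M rT T) (cl_blade {i}) = ?M (cl_blade {i}) (?M rT T)" if i: "i < 6" for i
  proof -
    let ?e = "cl_blade {i} :: 'a clf"
    have ec: "?e \<in> cl_carrier 6" using i by simp
    have "cl_rev (?f ?e) = ?M rTi (?M (cl_rev ?e) rT)" unfolding rT_def rTi_def by (rule rev_mult3)
    hence E: "?f ?e = ?M rTi (?M ?e rT)" using comm[OF i] by (simp add: blade1_rev)
    have "?M (?M rT T) ?e = ?M rT (?M T ?e)" by (simp only: cl_assoc)
    also have "\<dots> = ?M rT (?M (?f ?e) T)" using r0[OF ec] by simp
    also have "\<dots> = ?M rT (?M (?M rTi (?M ?e rT)) T)" unfolding E ..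
    also have "\<dots> = ?M ?e (?M rT T)" by (simp add: cl_assoc cancel_left[OF r1(1)])
    finally show ?thesis .
  qed
  have c1: "?M rT T \<in> cl_grade 6 0"
    by (rule center_grade0[where \<eta>=\<eta>]) (simp_all add: eta cr)
  have c1u: "?M rT T \<in> cl_units 6 \<eta>"
  proof (rule unitsI[of _ _ "?M Ti rTi"])
    show "?M (?M rT T) (?M Ti rTi) = cl_one"
      by (simp add: cl_assoc cancel_left[OF TTi] rTc r1)
    show "?M (?M Ti rTi) (?M rT T) = cl_one"
      by (simp add: cl_assoc cancel_left[OF r1(2)] Tc TiT)
  qed simp_all
  show ?thesis unfolding cl_Q_def cl_center_def using TP c1 c1u unfolding rT_def by simp
qed



lemma mult_units:
  assumes "x \<in> cl_units n \<eta>" "y \<in> cl_units n \<eta>"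
  shows "cl_mult n \<eta> x y \<in> cl_units n \<eta>"
proof -
  note ix = inv_props[OF assms(1)] and iy = inv_props[OF assms(2)]
  have c: "x \<in> cl_carrier n" "y \<in> cl_carrier n" using assms by (auto intro: units_carrier)
  show ?thesis
  proof (rule unitsI[of _ _ "cl_mult n \<eta> (cl_inv n \<eta> y) (cl_inv n \<eta> x)"])
    show "cl_mult n \<eta> (cl_mult n \<eta> x y) (cl_mult n \<eta> (cl_inv n \<eta> y) (cl_inv n \<eta> x)) = cl_one"
      by (simp add: cl_assoc cancel_left[OF iy(2)] ix)
    show "cl_mult n \<eta> (cl_mult n \<eta> (cl_inv n \<eta> y) (cl_inv n \<eta> x)) (cl_mult n \<eta> x y) = cl_one"
      by (simp add: cl_assoc cancel_left[OF ix(3)] iy c)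
  qed simp_all
qed

lemma gi_grade0: "x \<in> cl_grade n 0 \<Longrightarrow> gi x = x"
  unfolding gi_def
proof (rule ext)
  fix A assume "x \<in> cl_grade n 0"
  thus "(-1) ^ card A * x A = x A" unfolding cl_grade_def by (cases "x A = 0") auto
qed

lemma gi_even: "x \<in> cl_even n \<Longrightarrow> gi x = x"
  unfolding gi_def
proof (rule ext)
  fix A assume "x \<in> cl_even n"
  thus "(-1) ^ card A * x A = x A" unfolding cl_even_def by (cases "x A = 0") auto
qed

lemma gi_odd: "x \<in> cl_odd n \<Longrightarrow> gi x = cl_smul (-1) x"
  unfolding gi_def cl_smul_def
proof (rule ext)
  fix A assume "x \<in> cl_odd n"
  thus "(-1) ^ card A * x A = -1 * x A" unfolding cl_odd_def by (cases "x A = 0") auto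
qed

lemma grade3_char:
  fixes x :: "'a::field_char_0 clf"
  assumes c: "x \<in> cl_carrier 6" and g: "gi x = cl_smul (-1) x" and r: "cl_rev x = cl_smul (-1) x"
  shows "x \<in> cl_grade 6 3"
  unfolding cl_grade_def
proof (intro CollectI conjI allI impI c)
  fix A assume nz: "x A \<noteq> 0"
  hence "A \<subseteq> {..<6}" using c unfolding carrier_iff by auto
  hence k: "card A \<le> 6" by (metis card_lessThan card_mono finite_lessThan)
  have "(-1) ^ card A * x A = -1 * x A" using fun_cong[OF g, of A] unfolding gi_def cl_smul_def .
  hence o: "(-1::'a) ^ card A = -1" using mult_right_cancel[OF nz, of "(-1)^card A" "-1"] by blast
  have "(-1) ^ (card A * (card A - 1) div 2) * x A = -1 * x A"
    using fun_cong[OF r, of A] unfolding cl_rev_def cl_smul_def .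
  hence o2: "(-1::'a) ^ (card A * (card A - 1) div 2) = -1"
    using mult_right_cancel[OF nz, of "(-1)^(card A * (card A - 1) div 2)" "-1"] by blast
  have "card A = 0 \<or> card A = 1 \<or> card A = 2 \<or> card A = 3 \<or> card A = 4 \<or> card A = 5 \<or> card A = 6"
    using k by auto
  thus "card A = 3" using o o2 by (elim disjE) simp_all
qed

lemma Q_sub_gamma3:
  fixes \<eta> :: "nat \<Rightarrow> 'a::field_char_0"
  assumes TQ: "T \<in> cl_Q 6 \<eta>"
  shows "T \<in> cl_Gamma 6 \<eta> 3"
proof -
  let ?M = "cl_mult 6 \<eta>"
  from TQ have TP: "T \<in> cl_P 6 \<eta>" and cu: "?M (cl_rev T) T \<in> cl_units 6 \<eta>"
    and cz: "?M (cl_rev T) T \<in> cl_grade 6 0"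
    unfolding cl_Q_def cl_center_def by auto
  from TP obtain W T' where T: "T = ?M W T'" and W: "W \<in> cl_units 6 \<eta>" "W \<in> cl_grade 6 0"
    and T': "T' \<in> cl_units 6 \<eta>" "T' \<in> cl_even 6 \<or> T' \<in> cl_odd 6"
    unfolding cl_P_def cl_center_def by auto
  have Tu: "T \<in> cl_units 6 \<eta>" unfolding T using W(1) T'(1) by (rule mult_units)
  have Tc: "T \<in> cl_carrier 6" using Tu by (rule units_carrier)
  obtain \<epsilon> :: 'a where eps: "\<epsilon> * \<epsilon> = 1" "gi T = cl_smul \<epsilon> T"
  proof (cases "T' \<in> cl_even 6")
    case True
    hence "gi T = cl_smul 1 T" unfolding T gi_mult gi_grade0[OF W(2)] gi_even[OF True] by simp
    thus ?thesis using that[of 1] by simp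
  next
    case False
    hence "T' \<in> cl_odd 6" using T'(2) by auto
    hence "gi T = cl_smul (-1) T" unfolding T gi_mult gi_grade0[OF W(2)] gi_odd[OF \<open>T' \<in> cl_odd 6\<close>]
      by (simp add: mult_smul_right)
    thus ?thesis using that[of "-1"] by simp
  qed
  define Ti where "Ti = cl_inv 6 \<eta> T"
  have Tic: "Ti \<in> cl_carrier 6" and TTi: "?M T Ti = cl_one" and TiT: "?M Ti T = cl_one"
    using inv_props[OF Tu] unfolding Ti_def by auto
  define \<gamma> where "\<gamma> = ?M (cl_rev T) T {}"
  have ceq: "?M (cl_rev T) T = cl_smul \<gamma> cl_one" unfolding \<gamma>_def by (rule grade0_eq[OF cz])
  have g0: "\<gamma> \<noteq> 0"
  proof
    assume "\<gamma> = 0"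
    hence "?M (cl_rev T) T = (\<lambda>_. 0)" unfolding ceq cl_smul_def by simp
    hence "?M (?M (cl_rev T) T) (cl_inv 6 \<eta> (?M (cl_rev T) T)) = (\<lambda>_. 0)" by (simp add: mult_zero_l)
    thus False using inv_props(2)[OF cu] one_neq_zero by metis
  qed
  have Tieq: "Ti = cl_smul (inverse \<gamma>) (cl_rev T)"
  proof -
    have "Ti = ?M cl_one Ti" using Tic by (simp add: mult_one_left)
    also have "cl_one = cl_smul (inverse \<gamma>) (?M (cl_rev T) T)" unfolding ceq using g0 by simp
    also have "?M (cl_smul (inverse \<gamma>) (?M (cl_rev T) T)) Ti = cl_smul (inverse \<gamma>) (cl_rev T)"
      by (simp add: mult_smul_left cl_assoc TTi mult_one_right Tc)
    finally show ?thesis .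
  qed
  show ?thesis unfolding cl_Gamma_def
  proof (intro CollectI conjI ballI Tu)
    fix U :: "'a clf" assume U: "U \<in> cl_grade 6 3"
    let ?X = "?M (?M T U) (cl_rev T)"
    have "gi ?X = ?M (?M (gi T) (gi U)) (cl_rev (gi T))" by (simp add: gi_mult gi_rev)
    also have "\<dots> = cl_smul (\<epsilon> * \<epsilon> * -1) ?X"
      unfolding eps(2) grade3_gi[OF U] rev_smul by (simp add: mult_smul_left mult_smul_right ac_simps)
    finally have gX: "gi ?X = cl_smul (-1) ?X" using eps(1) by simp
    have "cl_rev ?X = ?M T (?M (cl_rev U) (cl_rev T))" by (simp add: rev_mult)
    also have "\<dots> = cl_smul (-1) ?X"
      unfolding grade3_rev[OF U] by (simp add: mult_smul_left mult_smul_right cl_assoc)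
    finally have rX: "cl_rev ?X = cl_smul (-1) ?X" .
    have "?X \<in> cl_grade 6 3" by (rule grade3_char) (simp_all add: gX rX)
    hence "cl_smul (inverse \<gamma>) ?X \<in> cl_grade 6 3" by (rule smul_grade)
    thus "?M (?M T U) (cl_inv 6 \<eta> T) \<in> cl_grade 6 3"
      unfolding Ti_def[symmetric] Tieq by (simp add: mult_smul_right)
  qed
qed



lemma sq1: "(x::'a::field) * x = 1 \<Longrightarrow> x = 1 \<or> x = -1"
proof -
  assume "x * x = 1"
  hence "(x - 1) * (x + 1) = 0" by (simp add: algebra_simps)
  thus ?thesis by (auto simp: add_eq_0_iff2)
qed

lemma blade_empty: "cl_blade {} = cl_one"
  unfolding cl_blade_def cl_one_def ..

lemma I6_fin: "{0..<6::nat} = {0,1,2,3,4,5}" by auto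

context
  fixes \<eta> :: "nat \<Rightarrow> 'a::field_char_0"
  assumes eta: "\<And>i. i < 6 \<Longrightarrow> \<eta> i = 1 \<or> \<eta> i = -1"
begin

abbreviation "II \<equiv> (cl_blade {0..<6} :: 'a clf)"
abbreviation "MM \<equiv> cl_mult 6 \<eta>"
definition "\<mu> = K \<eta> {0..<6} {0..<6}"

lemma I_PP: "{0..<6} \<in> PP 6" by auto

lemma II_sq: "MM II II = cl_smul \<mu> cl_one"
  unfolding mult_blade[OF I_PP I_PP] \<mu>_def by (simp add: blade_empty)

lemma mu_pm: "\<mu> = 1 \<or> \<mu> = -1"
proof (rule sq1)
  have "(\<Prod>k\<in>{0..<6::nat}. \<eta> k) * (\<Prod>k\<in>{0..<6}. \<eta> k) = (\<Prod>k\<in>{0..<6::nat}. \<eta> k * \<eta> k)"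
    by (simp add: prod.distrib)
  also have "\<dots> = 1"
  proof (intro prod.neutral ballI)
    fix x :: nat assume "x \<in> {0..<6}"
    hence "\<eta> x = 1 \<or> \<eta> x = -1" using eta by auto
    thus "\<eta> x * \<eta> x = 1" by auto
  qed
  finally have p: "(\<Prod>k\<in>{0..<6::nat}. \<eta> k) * (\<Prod>k\<in>{0..<6}. \<eta> k) = 1" .
  have s: "S {0..<6::nat} {0..<6} * S {0..<6::nat} {0..<6} = (1::'a)" by (rule S_sq)
  have q: "\<And>a b::'a. (a*b)*(a*b) = (a*a)*(b*b)" by (simp add: ac_simps)
  show "\<mu> * \<mu> = 1" unfolding \<mu>_def K_def blade_sign_S[OF finite_atLeastLessThan finite_atLeastLessThan] q s
    using p by simp
qed

lemma mu_ne: "1 - 4 * \<mu> \<noteq> 0"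
  using mu_pm by (elim disjE) simp_all

lemma card6: "card {0..<6::nat} = 6" by simp

lemma rev_II: "cl_rev II = cl_smul (-1) II"
  unfolding cl_rev_def cl_smul_def cl_blade_def
proof (rule ext)
  fix A :: "nat set"
  show "(-1) ^ (card A * (card A - 1) div 2) * (if A = {0..<6} then 1 else 0) = (-1::'a) * (if A = {0..<6} then 1 else 0)"
    by (cases "A = {0..<6}") (simp_all only: card6, simp_all)
qed

abbreviation "T0 \<equiv> cl_add cl_one (cl_smul 2 II)"
abbreviation "R0 \<equiv> cl_add cl_one (cl_smul (-2) II)"

lemma rev_one_add: "cl_rev (cl_add x y) = cl_add (cl_rev x) (cl_rev y)"
  unfolding cl_rev_def cl_add_def by (rule ext) (simp add: distrib_left)

lemma rev_T0: "cl_rev T0 = R0"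
  unfolding rev_one_add rev_smul rev_II by simp

lemma II_c: "II \<in> cl_carrier 6" by (rule blade_carrier[OF I_PP])

lemma R0T0: "MM R0 T0 = cl_smul (1 - 4 * \<mu>) cl_one"
  unfolding mult_add_left mult_add_right mult_smul_left mult_smul_right II_sq
  by (rule ext) (simp add: mult_one_left mult_one_right II_c cl_add_def cl_smul_def algebra_simps)

lemma T0R0: "MM T0 R0 = cl_smul (1 - 4 * \<mu>) cl_one"
  unfolding mult_add_left mult_add_right mult_smul_left mult_smul_right II_sq
  by (rule ext) (simp add: mult_one_left mult_one_right II_c cl_add_def cl_smul_def algebra_simps)

lemma T0c: "T0 \<in> cl_carrier 6" using II_c by simp
lemma R0c: "R0 \<in> cl_carrier 6" using II_c by simp

definition "\<iota> = inverse (1 - 4 * \<mu>)"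

lemma T0_units: "T0 \<in> cl_units 6 \<eta>"
proof (rule unitsI[OF T0c _ _ _, of "cl_smul \<iota> R0"])
  show "cl_smul \<iota> R0 \<in> cl_carrier 6" using R0c by simp
  show "MM T0 (cl_smul \<iota> R0) = cl_one" unfolding mult_smul_right T0R0 \<iota>_def using mu_ne by simp
  show "MM (cl_smul \<iota> R0) T0 = cl_one" unfolding mult_smul_left R0T0 \<iota>_def using mu_ne by simp
qed

lemma T0_inv: "cl_inv 6 \<eta> T0 = cl_smul \<iota> R0"
  by (rule inv_unique[OF T0_units]) (use R0c mu_ne in \<open>simp_all add: mult_smul_right T0R0 \<iota>_def\<close>)

lemma T0_Q: "T0 \<in> cl_Q 6 \<eta>"
  unfolding cl_Q_def
proof (intro CollectI conjI)
  have ev: "T0 \<in> cl_even 6" 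
    unfolding cl_even_def using T0c by (auto simp: cl_add_def cl_smul_def cl_blade_def cl_one_def)
  have "T0 = MM cl_one T0" using T0c by (simp add: mult_one_left)
  moreover have "cl_one \<in> cl_units 6 \<eta> \<inter> cl_center 6" unfolding cl_center_def
    by (simp add: one_units one_grade0)
  ultimately show "T0 \<in> cl_P 6 \<eta>" unfolding cl_P_def using ev T0_units by blast
  have u: "cl_smul (1 - 4 * \<mu>) cl_one \<in> cl_units 6 \<eta>"
    by (rule unitsI[of _ _ "cl_smul \<iota> cl_one"]) (use mu_ne in \<open>simp_all add: mult_smul_left mult_smul_right mult_one_left \<iota>_def\<close>)
  show "MM (cl_rev T0) T0 \<in> cl_units 6 \<eta> \<inter> cl_center 6"
    unfolding rev_T0 R0T0 cl_center_def using u smul_grade[OF one_grade0] by simp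
qed

abbreviation "JJ \<equiv> {1,2,3,4,5::nat}"

lemma sJ: "sd {0..<6} {0} = JJ" "sd {0} {0..<6} = JJ" "sd JJ {0..<6} = {0}"
  by auto

lemma K_a: "K \<eta> {0..<6} {0} = - \<eta> 0"
proof -
  have "{0..<6::nat} \<inter> {0} = {0}" by auto
  thus ?thesis unfolding K_def blade_sign_S[OF finite_atLeastLessThan finite.insertI[OF finite.emptyI]]
    unfolding S_def I6_fin by (simp add: sg_def)
qed

lemma K_b: "K \<eta> {0} {0..<6} = \<eta> 0"
proof -
  have "{0} \<inter> {0..<6::nat} = {0}" by auto
  thus ?thesis unfolding K_def blade_sign_S[OF finite.insertI[OF finite.emptyI] finite_atLeastLessThan]
    unfolding S_def I6_fin by (simp add: sg_def)
qed

lemma T0_not_G1: "T0 \<notin> cl_Gamma 6 \<eta> 1"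
proof
  assume G: "T0 \<in> cl_Gamma 6 \<eta> 1"
  let ?E = "cl_blade {0} :: 'a clf" and ?B = "cl_blade JJ :: 'a clf"
  have P: "{0} \<in> PP 6" "JJ \<in> PP 6" "{0..<6} \<in> PP 6" by auto
  have Ec: "?E \<in> cl_carrier 6" "?B \<in> cl_carrier 6" using P by simp_all
  have "?E \<in> cl_grade 6 1" by (rule blade_grade) auto
  hence "MM (MM T0 ?E) (cl_inv 6 \<eta> T0) \<in> cl_grade 6 1" using G unfolding cl_Gamma_def by auto
  hence g: "MM (MM T0 ?E) (cl_smul \<iota> R0) \<in> cl_grade 6 1" unfolding T0_inv .
  have e1: "MM II ?E = cl_smul (- \<eta> 0) ?B" using mult_blade[OF P(3) P(1), of \<eta>] unfolding sJ K_a .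
  have e2: "MM ?E II = cl_smul (\<eta> 0) ?B" using mult_blade[OF P(1) P(3), of \<eta>] unfolding sJ K_b .
  have e3: "MM ?B II = cl_smul (K \<eta> JJ {0..<6}) ?E" using mult_blade[OF P(2) P(3), of \<eta>] unfolding sJ .
  have ne: "JJ \<noteq> {0}" "JJ \<noteq> {}" by auto
  have v: "MM (MM T0 ?E) (cl_smul \<iota> R0) JJ = \<iota> * (- 4 * \<eta> 0)"
    unfolding mult_add_left mult_add_right mult_smul_left mult_smul_right e1 e2 e3
      mult_one_left[OF Ec(1)] mult_one_right[OF Ec(1)] mult_one_right[OF Ec(2)]
    using ne by (simp add: cl_add_def cl_smul_def cl_blade_def cl_one_def algebra_simps)
  have "\<iota> * (- 4 * \<eta> 0) \<noteq> 0" unfolding \<iota>_def using mu_ne eta[of 0] by auto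
  hence "MM (MM T0 ?E) (cl_smul \<iota> R0) JJ \<noteq> 0" unfolding v .
  hence "card JJ = 1" using g unfolding cl_grade_def by blast
  moreover have "card JJ = 5" by simp
  ultimately show False by simp
qed

end


lemma main6:
  fixes \<eta> :: "nat \<Rightarrow> 'a::field_char_0"
  assumes eta: "\<And>i. i < 6 \<Longrightarrow> \<eta> i = 1 \<or> \<eta> i = -1"
  shows "cl_Gamma 6 \<eta> 3 = cl_Q 6 \<eta> \<and> cl_Gamma 6 \<eta> 1 \<noteq> cl_Gamma 6 \<eta> 3 \<and>
     cl_add cl_one (cl_smul 2 (cl_blade {0..<6})) \<in> cl_Gamma 6 \<eta> 3 \<and>
     cl_add cl_one (cl_smul 2 (cl_blade {0..<6})) \<notin> cl_Gamma 6 \<eta> 1"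
proof -
  have ne: "\<And>i. i < 6 \<Longrightarrow> \<eta> i \<noteq> 0" using eta by fastforce
  have eq: "cl_Gamma 6 \<eta> 3 = cl_Q 6 \<eta>"
    using gamma3_sub_Q[where \<eta>=\<eta>, OF ne] Q_sub_gamma3[of _ \<eta>] by blast
  have a: "cl_add cl_one (cl_smul 2 (cl_blade {0..<6})) \<in> cl_Gamma 6 \<eta> 3"
    unfolding eq by (rule T0_Q[OF eta])
  have b: "cl_add cl_one (cl_smul 2 (cl_blade {0..<6})) \<notin> cl_Gamma 6 \<eta> 1"
    by (rule T0_not_G1[OF eta])
  show ?thesis using eq a b by blast
qed

theorem mainTheorem17:
  shows "(\<forall>p q :: nat. p + q = 6 \<longrightarrow>
           (let \<eta> = sig_metric p q;
                T = cl_add cl_one (cl_smul 2 (cl_blade {0..<6})) :: real clf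
            in cl_Gamma 6 \<eta> 3 = cl_Q 6 \<eta> \<and> cl_Gamma 6 \<eta> 1 \<noteq> cl_Gamma 6 \<eta> 3 \<and>
               T \<in> cl_Gamma 6 \<eta> 3 \<and> T \<notin> cl_Gamma 6 \<eta> 1))
       \<and> (let \<eta> = (\<lambda>_. 1) :: nat \<Rightarrow> complex;
               T = cl_add cl_one (cl_smul 2 (cl_blade {0..<6})) :: complex clf
           in cl_Gamma 6 \<eta> 3 = cl_Q 6 \<eta> \<and> cl_Gamma 6 \<eta> 1 \<noteq> cl_Gamma 6 \<eta> 3 \<and>
              T \<in> cl_Gamma 6 \<eta> 3 \<and> T \<notin> cl_Gamma 6 \<eta> 1)"
proof (intro conjI allI impI)
  fix p q :: nat assume pq: "p + q = 6"
  have "\<And>i. i < 6 \<Longrightarrow> sig_metric p q i = 1 \<or> sig_metric p q i = -1"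
    unfolding sig_metric_def using pq by auto
  thus "let \<eta> = sig_metric p q;
                T = cl_add cl_one (cl_smul 2 (cl_blade {0..<6})) :: real clf
            in cl_Gamma 6 \<eta> 3 = cl_Q 6 \<eta> \<and> cl_Gamma 6 \<eta> 1 \<noteq> cl_Gamma 6 \<eta> 3 \<and>
               T \<in> cl_Gamma 6 \<eta> 3 \<and> T \<notin> cl_Gamma 6 \<eta> 1"
    unfolding Let_def by (rule main6)
next
  show "let \<eta> = (\<lambda>_. 1) :: nat \<Rightarrow> complex;
               T = cl_add cl_one (cl_smul 2 (cl_blade {0..<6})) :: complex clf
           in cl_Gamma 6 \<eta> 3 = cl_Q 6 \<eta> \<and> cl_Gamma 6 \<eta> 1 \<noteq> cl_Gamma 6 \<eta> 3 \<and>
              T \<in> cl_Gamma 6 \<eta> 3 \<and> T \<notin> cl_Gamma 6 \<eta> 1"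
    unfolding Let_def by (rule main6) simp
qed


end
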